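(* Let $X_1,\dots,X_n$ be independent with $X_i\sim\mathrm{Bernoulli}(p_i)$, $\lambda=\sum_{i=1}^np_i$, and let $\alpha_1,\dots,\alpha_n$ be i.i.d., independent of the $X_i$, with $\Pr(\alpha_i=1)=\Pr(\alpha_i=2)=1/2$. Let $S_n=\sum_{i=1}^n\alpha_iX_i$. Then $$D\big(P_{S_n}\,\|\,\mathrm{Po}(\lambda/2,\lambda/2)\big)\le\sum_{i=1}^np_i^2.$$
   Context: $\mathrm{Po}(\lambda/2,\lambda/2)$ denotes the compound Poisson distribution of $Z_1+2Z_2$, where $Z_1,Z_2$ are i.i.d. Poisson with mean $\lambda/2$. $D(P\|Q)=\sum_xP(x)\log\frac{P(x)}{Q(x)}$ is relative entropy with natural logarithm. *)

theory Defs
  imports "HOL-Probability.Probability"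
begin

definition po_pmf :: "real \<Rightarrow> nat pmf" where
  "po_pmf r = (if r > 0 then poisson_pmf r else return_pmf 0)"

text \<open>Compound Poisson Po(a,b): law of Z1 + 2 Z2 with Z1 ~ Po(a), Z2 ~ Po(b) independent.\<close>
definition cpo_pmf :: "real \<Rightarrow> real \<Rightarrow> nat pmf" where
  "cpo_pmf a b = map_pmf (\<lambda>(z1, z2). z1 + 2 * z2) (pair_pmf (po_pmf a) (po_pmf b))"

definition rel_entropy :: "'a pmf \<Rightarrow> 'a pmf \<Rightarrow> ereal" where
  "rel_entropy P Q =
     (if set_pmf P \<subseteq> set_pmf Q
      then ereal (\<Sum>\<^sub>\<infinity>x\<in>set_pmf P. pmf P x * ln (pmf P x / pmf Q x))
      else \<infinity>)"

definition S_pmf :: "nat \<Rightarrow> (nat \<Rightarrow> real) \<Rightarrow> nat pmf" where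
  "S_pmf n p = map_pmf (\<lambda>(X, \<alpha>). \<Sum>i<n. \<alpha> i * (if X i then 1 else 0))
     (pair_pmf (Pi_pmf {..<n} False (\<lambda>i. bernoulli_pmf (p i)))
               (Pi_pmf {..<n} 1 (\<lambda>i. pmf_of_set {1, 2})))"

end

theory Submission
  imports Defs
begin


definition conv :: "nat pmf \<Rightarrow> nat pmf \<Rightarrow> nat pmf" where
  "conv A B = map_pmf (\<lambda>(x, y). x + y) (pair_pmf A B)"

definition dd :: "nat pmf \<Rightarrow> nat pmf \<Rightarrow> real" where
  "dd P Q = (\<Sum>x\<in>set_pmf P. pmf P x * ln (pmf P x / pmf Q x))"

lemma pmf_map_ge:
  assumes "finite F" "F \<subseteq> g -` {k}"
  shows "sum (pmf M) F \<le> pmf (map_pmf g M) k"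
proof -
  have "sum (pmf M) F = measure (measure_pmf M) F" using assms by (simp add: measure_measure_pmf_finite)
  also have "\<dots> \<le> measure (measure_pmf M) (g -` {k})"
    using assms by (intro measure_pmf.finite_measure_mono) auto
  finally show ?thesis by (simp add: pmf_map)
qed

lemma pmf_map_eq:
  assumes "finite F" "F = g -` {k} \<inter> set_pmf M"
  shows "pmf (map_pmf g M) k = sum (pmf M) F"
proof -
  have "pmf (map_pmf g M) k = measure (measure_pmf M) (g -` {k})" by (simp add: pmf_map)
  also have "\<dots> = measure (measure_pmf M) (g -` {k} \<inter> set_pmf M)" by (rule measure_Int_set_pmf[symmetric])
  also have "\<dots> = sum (pmf M) F" using assms by (simp add: measure_measure_pmf_finite)
  finally show ?thesis .
qed

lemma logsum:
  fixes a b :: "'a \<Rightarrow> real"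
  assumes F: "finite F" and pos: "\<And>t. t \<in> F \<Longrightarrow> a t > 0 \<and> b t > 0" and ne: "F \<noteq> {}"
    and bQ: "sum b F \<le> Q"
  shows "sum a F * ln (sum a F / Q) \<le> (\<Sum>t\<in>F. a t * ln (a t / b t))"
proof -
  define S where "S = sum a F"
  have Spos: "S > 0" unfolding S_def using F ne pos by (intro sum_pos) auto
  have Bpos: "sum b F > 0" using F ne pos by (intro sum_pos) auto
  hence Qpos: "Q > 0" using bQ by linarith
  have tb: "a t * ln (a t / b t) \<ge> a t * ln (S / Q) + a t - b t * S / Q" if t: "t \<in> F" for t
  proof -
    from pos[OF t] have at: "a t > 0" and bt: "b t > 0" by auto
    define x where "x = a t * Q / (b t * S)"
    have xpos: "x > 0" unfolding x_def using at bt Spos Qpos by simp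
    have "ln (1 / x) \<le> 1 / x - 1" using xpos by (intro ln_le_minus_one) simp
    hence l: "ln x \<ge> 1 - 1 / x" using xpos by (simp add: ln_div)
    have "a t / b t = (S / Q) * x"
      unfolding x_def using at bt Spos Qpos by (simp add: field_simps)
    moreover have "ln ((S / Q) * x) = ln (S / Q) + ln x"
      using xpos Spos Qpos by (intro ln_mult_pos) auto
    ultimately have "ln (a t / b t) = ln (S / Q) + ln x" by simp
    hence "a t * ln (a t / b t) = a t * ln (S / Q) + a t * ln x" by (simp add: algebra_simps)
    moreover have "a t * ln x \<ge> a t * (1 - 1 / x)" using l at by (intro mult_left_mono) auto
    moreover have "a t * (1 - 1 / x) = a t - b t * S / Q"
      unfolding x_def using at bt Spos Qpos by (simp add: field_simps)
    ultimately show ?thesis by linarith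
  qed
  have A1: "(\<Sum>t\<in>F. a t * ln (a t / b t)) \<ge> (\<Sum>t\<in>F. a t * ln (S / Q) + a t - b t * S / Q)"
    using tb by (intro sum_mono) auto
  have A2: "(\<Sum>t\<in>F. a t * ln (S / Q) + a t - b t * S / Q) = S * ln (S / Q) + S - sum b F * S / Q"
    by (simp add: sum.distrib sum_subtractf sum_distrib_right[symmetric] sum_divide_distrib[symmetric] S_def)
  have "sum b F * S / Q \<le> Q * S / Q"
    using bQ Spos Qpos by (intro divide_right_mono mult_right_mono) auto
  hence A3: "sum b F * S / Q \<le> S" using Qpos by simp
  have "S * ln (S / Q) \<le> (\<Sum>t\<in>F. a t * ln (a t / b t))" using A1 A2 A3 by linarith
  thus ?thesis unfolding S_def .
qed



lemma set_conv: "set_pmf (conv A B) = (\<lambda>(x,y). x+y) ` (set_pmf A \<times> set_pmf B)"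
  by (simp add: conv_def)

lemma conv_d:
  assumes fA: "finite (set_pmf A)" and fB: "finite (set_pmf B)"
    and sAC: "set_pmf A \<subseteq> set_pmf C" and sBE: "set_pmf B \<subseteq> set_pmf E"
  shows "set_pmf (conv A B) \<subseteq> set_pmf (conv C E)" and "dd (conv A B) (conv C E) \<le> dd A C + dd B E"
proof -
  show "set_pmf (conv A B) \<subseteq> set_pmf (conv C E)" using sAC sBE by (auto simp: set_conv)
  define T where "T = set_pmf A \<times> set_pmf B"
  define f where "f = (\<lambda>(x::nat,y::nat). x+y)"
  define a where "a = (\<lambda>(i,j). pmf A i * pmf B j)"
  define b where "b = (\<lambda>(i,j). pmf C i * pmf E j)"
  define g where "g = (\<lambda>t. a t * ln (a t / b t))"
  have fT: "finite T" using fA fB T_def by simp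
  have sc: "set_pmf (conv A B) = f ` T" by (simp add: set_conv T_def f_def)
  have pos: "a t > 0 \<and> b t > 0" if "t \<in> T" for t
    using that sAC sBE by (auto simp: T_def a_def b_def intro!: mult_pos_pos pmf_positive)
  have P: "pmf (conv A B) k = sum a {t\<in>T. f t = k}" for k
  proof -
    have "pmf (conv A B) k = sum (pmf (pair_pmf A B)) {t\<in>T. f t = k}"
      unfolding conv_def using fT by (intro pmf_map_eq) (auto simp: T_def f_def)
    also have "\<dots> = sum a {t\<in>T. f t = k}"
      by (intro sum.cong) (auto simp: a_def pmf_pair)
    finally show ?thesis .
  qed
  have Q: "sum b {t\<in>T. f t = k} \<le> pmf (conv C E) k" for k
  proof -
    have "sum b {t\<in>T. f t = k} = sum (pmf (pair_pmf C E)) {t\<in>T. f t = k}"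
      by (intro sum.cong) (auto simp: b_def pmf_pair)
    also have "\<dots> \<le> pmf (conv C E) k"
      unfolding conv_def using fT by (intro pmf_map_ge) (auto simp: f_def)
    finally show ?thesis .
  qed
  have "dd (conv A B) (conv C E) = (\<Sum>k\<in>f ` T. pmf (conv A B) k * ln (pmf (conv A B) k / pmf (conv C E) k))"
    by (simp add: dd_def sc)
  also have "\<dots> \<le> (\<Sum>k\<in>f ` T. \<Sum>t\<in>{t\<in>T. f t = k}. g t)"
  proof (intro sum_mono)
    fix k assume k: "k \<in> f ` T"
    have ne: "{t\<in>T. f t = k} \<noteq> {}" using k by auto
    show "pmf (conv A B) k * ln (pmf (conv A B) k / pmf (conv C E) k) \<le> (\<Sum>t\<in>{t\<in>T. f t = k}. g t)"
      unfolding P g_def using fT pos ne Q[of k] by (intro logsum) auto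
  qed
  also have "\<dots> = sum g T"
    using fT by (intro sum.group) auto
  also have "\<dots> = (\<Sum>(i,j)\<in>T. pmf A i * pmf B j * ln (pmf A i / pmf C i) + pmf A i * pmf B j * ln (pmf B j / pmf E j))"
  proof (intro sum.cong refl)
    fix t assume t: "t \<in> T"
    obtain i j where ij: "t = (i, j)" by (cases t)
    have p: "pmf A i > 0" "pmf B j > 0" "pmf C i > 0" "pmf E j > 0"
      using t sAC sBE by (auto simp: ij T_def pmf_positive)
    have "a t / b t = (pmf A i / pmf C i) * (pmf B j / pmf E j)" by (simp add: ij a_def b_def)
    moreover have "ln ((pmf A i / pmf C i) * (pmf B j / pmf E j)) = ln (pmf A i / pmf C i) + ln (pmf B j / pmf E j)"
      using p by (intro ln_mult_pos) auto
    ultimately have "ln (a t / b t) = ln (pmf A i / pmf C i) + ln (pmf B j / pmf E j)"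
      by metis
    thus "g t = (case t of (i,j) \<Rightarrow> pmf A i * pmf B j * ln (pmf A i / pmf C i) + pmf A i * pmf B j * ln (pmf B j / pmf E j))"
      by (simp add: g_def ij a_def algebra_simps)
  qed
  also have "\<dots> = (\<Sum>i\<in>set_pmf A. \<Sum>j\<in>set_pmf B. pmf A i * pmf B j * ln (pmf A i / pmf C i) + pmf A i * pmf B j * ln (pmf B j / pmf E j))"
    unfolding T_def by (rule sum.cartesian_product[symmetric])
  also have "\<dots> = (\<Sum>i\<in>set_pmf A. pmf A i * ln (pmf A i / pmf C i) * (\<Sum>j\<in>set_pmf B. pmf B j) + pmf A i * (\<Sum>j\<in>set_pmf B. pmf B j * ln (pmf B j / pmf E j)))"
    by (simp add: sum.distrib sum_distrib_left sum_distrib_right algebra_simps)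
  also have "\<dots> = (\<Sum>i\<in>set_pmf A. pmf A i * ln (pmf A i / pmf C i)) + (\<Sum>i\<in>set_pmf A. pmf A i) * dd B E"
    using fB by (simp add: sum_pmf_eq_1 sum.distrib sum_distrib_right dd_def)
  also have "\<dots> = dd A C + dd B E"
    using fA by (simp add: sum_pmf_eq_1 dd_def)
  finally show "dd (conv A B) (conv C E) \<le> dd A C + dd B E" .
qed



lemma pmf_po: "r \<ge> 0 \<Longrightarrow> pmf (po_pmf r) k = r ^ k / fact k * exp (- r)"
  by (cases "r = 0"; cases k) (auto simp: po_pmf_def)

lemma pmf_conv: "pmf (conv A B) k = (\<Sum>i\<le>k. pmf A i * pmf B (k - i))"
proof -
  have e: "(\<lambda>(x,y). x+y) -` {k} = (\<lambda>i. (i, k-i)) ` {..k}"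
    by (force simp: image_iff)
  have "pmf (conv A B) k = measure (measure_pmf (pair_pmf A B)) ((\<lambda>i. (i, k-i)) ` {..k})"
    by (simp add: conv_def pmf_map e)
  also have "\<dots> = sum (pmf (pair_pmf A B)) ((\<lambda>i. (i, k-i)) ` {..k})"
    by (simp add: measure_measure_pmf_finite)
  also have "\<dots> = (\<Sum>i\<le>k. pmf A i * pmf B (k - i))"
    by (subst sum.reindex) (auto simp: inj_on_def pmf_pair)
  finally show ?thesis .
qed

lemma ee: "exp (- r) * exp (- s) = exp (- (r + s :: real))"
  by (metis exp_add minus_add_distrib)

lemma po_add:
  assumes "r \<ge> 0" "s \<ge> 0"
  shows "conv (po_pmf r) (po_pmf s) = po_pmf (r + s)"
proof (rule pmf_eqI)
  fix k
  have "pmf (conv (po_pmf r) (po_pmf s)) k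
      = (\<Sum>i\<le>k. r ^ i / fact i * exp (- r) * (s ^ (k - i) / fact (k - i) * exp (- s)))"
    using assms by (simp add: pmf_conv pmf_po)
  also have "\<dots> = (\<Sum>i\<le>k. of_nat (k choose i) * r ^ i * s ^ (k - i)) / fact k * (exp (- r) * exp (- s))"
    unfolding sum_divide_distrib sum_distrib_right
  proof (intro sum.cong refl)
    fix i assume "i \<in> {..k}"
    hence ik: "i \<le> k" by simp
    have "real (k choose i) = fact k / (fact i * fact (k - i))"
      using binomial_fact[OF ik] by simp
    thus "r ^ i / fact i * exp (- r) * (s ^ (k - i) / fact (k - i) * exp (- s)) =
          real (k choose i) * r ^ i * s ^ (k - i) / fact k * (exp (- r) * exp (- s))"
      by (simp add: field_simps)
  qed
  also have "\<dots> = pmf (po_pmf (r + s)) k"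
    using assms by (simp add: pmf_po binomial_ring ee)
  finally show "pmf (conv (po_pmf r) (po_pmf s)) k = pmf (po_pmf (r + s)) k" .
qed

lemma cpo_as_conv: "cpo_pmf a b = conv (po_pmf a) (map_pmf (\<lambda>z. 2 * z) (po_pmf b))"
  by (simp add: cpo_pmf_def conv_def pair_map_pmf2 map_pmf_comp case_prod_unfold apsnd_def map_prod_def)

lemma conv_bind: "conv A B = bind_pmf A (\<lambda>x. bind_pmf B (\<lambda>y. return_pmf (x + y)))"
  by (simp add: conv_def pair_pmf_def map_pmf_def bind_assoc_pmf bind_return_pmf)

lemma conv_swap4: "conv (conv A B) (conv C D) = conv (conv A C) (conv B D)"
  by (simp add: conv_bind bind_assoc_pmf bind_return_pmf bind_commute_pmf[of B C] add_ac)

lemma conv_map2: "conv (map_pmf (\<lambda>z. 2 * z) B) (map_pmf (\<lambda>z. 2 * z) D) = map_pmf (\<lambda>z. 2 * z) (conv B D)"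
  by (simp add: conv_def pair_map_pmf1 pair_map_pmf2 map_pmf_comp split_beta algebra_simps apsnd_def apfst_def map_prod_def)

lemma cpo_add:
  assumes "a \<ge> 0" "b \<ge> 0" "c \<ge> 0" "d \<ge> 0"
  shows "conv (cpo_pmf a b) (cpo_pmf c d) = cpo_pmf (a + c) (b + d)"
  using assms by (simp add: cpo_as_conv conv_swap4 conv_map2 po_add)



definition Yp :: "real \<Rightarrow> nat pmf" where
  "Yp q = map_pmf (\<lambda>(x, a). a * (if x then 1 else 0)) (pair_pmf (bernoulli_pmf q) (pmf_of_set {1, 2::nat}))"

lemma Yp_bind: "Yp q = bind_pmf (bernoulli_pmf q) (\<lambda>y. bind_pmf (pmf_of_set {1, 2::nat}) (\<lambda>a. return_pmf (a * (if y then 1 else 0))))"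
  by (simp add: Yp_def pair_pmf_def map_pmf_def bind_assoc_pmf bind_return_pmf)

lemma G_upd:
  fixes f :: "nat \<Rightarrow> bool" and g :: "nat \<Rightarrow> nat"
  shows "(\<Sum>i<Suc n. (g(n := a)) i * (if (f(n := y)) i then 1 else 0)) =
     (\<Sum>i<n. g i * (if f i then 1 else 0)) + a * (if y then 1 else 0)"
proof -
  have "(\<Sum>i<n. (g(n := a)) i * (if (f(n := y)) i then 1 else 0)) = (\<Sum>i<n. g i * (if f i then 1 else 0))"
    by (intro sum.cong) auto
  thus ?thesis by simp
qed

lemma S_bind: "S_pmf n p = bind_pmf (Pi_pmf {..<n} False (\<lambda>i. bernoulli_pmf (p i)))
   (\<lambda>X. bind_pmf (Pi_pmf {..<n} 1 (\<lambda>i. pmf_of_set {1, 2})) (\<lambda>\<alpha>. return_pmf (\<Sum>i<n. \<alpha> i * (if X i then 1 else 0))))"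
  by (simp add: S_pmf_def pair_pmf_def map_pmf_def bind_assoc_pmf bind_return_pmf)

lemma S_Suc: "S_pmf (Suc n) p = conv (S_pmf n p) (Yp (p n))"
proof -
  have l: "{..<Suc n} = insert n {..<n}" by auto
  show ?thesis
    unfolding S_bind conv_bind Yp_bind l
    by (simp add: Pi_pmf_insert' bind_assoc_pmf bind_return_pmf G_upd
        bind_commute_pmf[of "pmf_of_set _" "Pi_pmf _ _ _"]
        bind_commute_pmf[of "bernoulli_pmf _" "Pi_pmf _ _ _"] add_ac)
qed



lemma pmf_Yp:
  assumes "0 \<le> q" "q \<le> 1"
  shows "pmf (Yp q) k = (if k = 0 then 1 - q else if k = 1 \<or> k = 2 then q / 2 else 0)"
proof -
  have "Yp q = bind_pmf (bernoulli_pmf q) (\<lambda>y. if y then pmf_of_set {1, 2::nat} else return_pmf 0)"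
    unfolding Yp_bind by (intro bind_pmf_cong refl) (auto simp: bind_return_pmf' bind_pmf_const)
  thus ?thesis using assms by (auto simp: pmf_bind indicator_def)
qed

lemma set_Yp: "set_pmf (Yp q) \<subseteq> {0, 1, 2}"
  by (auto simp: Yp_def split: if_splits)

lemma cpo_lb1:
  "k = i + 2 * j \<Longrightarrow> pmf (pair_pmf (po_pmf a) (po_pmf b)) (i, j) \<le> pmf (cpo_pmf a b) k"
  unfolding cpo_pmf_def using pmf_map_ge[of "{(i,j)}" "\<lambda>(z1,z2). z1 + 2 * z2" "i + 2 * j"] by simp

lemma cpo_lb:
  assumes "q \<ge> 0"
  shows "exp (- q) \<le> pmf (cpo_pmf (q/2) (q/2)) 0"
    and "q / 2 * exp (- q) \<le> pmf (cpo_pmf (q/2) (q/2)) 1"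
    and "q / 2 * exp (- q) \<le> pmf (cpo_pmf (q/2) (q/2)) 2"
proof -
  have e: "exp (- (q/2)) * exp (- (q/2)) = exp (- q)" using ee[of "q/2" "q/2"] by simp
  have e2: "exp (- (q/2)) * (q * exp (- (q/2))) = q * exp (- q)" by (metis e mult.left_commute)
  show "exp (- q) \<le> pmf (cpo_pmf (q/2) (q/2)) 0"
    using cpo_lb1[of 0 0 0 "q/2" "q/2"] assms e by (simp add: pmf_pair pmf_po)
  show "q / 2 * exp (- q) \<le> pmf (cpo_pmf (q/2) (q/2)) 1"
    using cpo_lb1[of 1 1 0 "q/2" "q/2"] assms e e2 by (simp add: pmf_pair pmf_po mult.assoc)
  show "q / 2 * exp (- q) \<le> pmf (cpo_pmf (q/2) (q/2)) 2"
    using cpo_lb1[of 2 0 1 "q/2" "q/2"] assms e e2 by (simp add: pmf_pair pmf_po mult.assoc)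
qed

lemma step1:
  assumes q0: "0 \<le> q" and q1: "q \<le> 1"
  shows "set_pmf (Yp q) \<subseteq> set_pmf (cpo_pmf (q/2) (q/2))"
    and "dd (Yp q) (cpo_pmf (q/2) (q/2)) \<le> q ^ 2"
proof -
  let ?Q = "cpo_pmf (q/2) (q/2)"
  let ?y = "pmf (Yp q)"
  define L where "L k = (if k = 0 then exp (- q) else q / 2 * exp (- q))" for k :: nat
  have LQ: "L k \<le> pmf ?Q k" if "k \<in> set_pmf (Yp q)" for k
    using that set_Yp cpo_lb[OF q0] by (auto simp: L_def)
  have Lpos: "L k > 0" if "k \<in> set_pmf (Yp q)" for k
  proof -
    have "?y k > 0" using that by (simp add: pmf_positive)
    thus ?thesis using q0 q1 by (auto simp: L_def pmf_Yp split: if_splits)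
  qed
  show "set_pmf (Yp q) \<subseteq> set_pmf ?Q"
  proof
    fix k assume k: "k \<in> set_pmf (Yp q)"
    have "pmf ?Q k > 0" using LQ[OF k] Lpos[OF k] by linarith
    thus "k \<in> set_pmf ?Q" by (simp add: set_pmf_iff)
  qed
  have "dd (Yp q) ?Q \<le> (\<Sum>k\<in>set_pmf (Yp q). ?y k * ln (?y k / L k))"
    unfolding dd_def
  proof (intro sum_mono)
    fix k assume k: "k \<in> set_pmf (Yp q)"
    have yk: "?y k > 0" using k by (simp add: pmf_positive)
    have "?y k / pmf ?Q k \<le> ?y k / L k"
      using LQ[OF k] Lpos[OF k] yk by (intro divide_left_mono) auto
    moreover have "?y k / pmf ?Q k > 0" using LQ[OF k] Lpos[OF k] yk by simp
    ultimately have "ln (?y k / pmf ?Q k) \<le> ln (?y k / L k)" by simp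
    thus "?y k * ln (?y k / pmf ?Q k) \<le> ?y k * ln (?y k / L k)"
      using yk by (intro mult_left_mono) auto
  qed
  also have "\<dots> = (\<Sum>k\<in>{0,1,2}. ?y k * ln (?y k / L k))"
    using set_Yp by (intro sum.mono_neutral_left) (auto simp: set_pmf_iff)
  also have "\<dots> = (1 - q) * ln ((1 - q) / exp (- q)) + q / 2 * ln ((q / 2) / (q / 2 * exp (- q))) * 2"
    using q0 q1 by (simp add: pmf_Yp L_def)
  also have "\<dots> \<le> q ^ 2"
  proof -
    have t2: "q / 2 * ln ((q / 2) / (q / 2 * exp (- q))) * 2 = q ^ 2"
    proof (cases "q = 0")
      case False
      hence "(q / 2) / (q / 2 * exp (- q)) = exp q" using q0 by (simp add: exp_minus field_simps)
      thus ?thesis by (simp add: power2_eq_square)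
    qed simp
    have t1: "(1 - q) * ln ((1 - q) / exp (- q)) \<le> 0"
    proof (cases "q = 1")
      case False
      hence pos: "(1 - q) / exp (- q) > 0" using q1 by simp
      have "1 + (- q) \<le> exp (- q)" by (rule exp_ge_add_one_self)
      hence "(1 - q) / exp (- q) \<le> 1" by simp
      moreover have "ln ((1 - q) / exp (- q)) \<le> (1 - q) / exp (- q) - 1"
        using pos by (intro ln_le_minus_one)
      ultimately have "ln ((1 - q) / exp (- q)) \<le> 0" by linarith
      thus ?thesis using q1 by (intro mult_nonneg_nonpos) auto
    qed simp
    show ?thesis using t1 t2 by linarith
  qed
  finally show "dd (Yp q) ?Q \<le> q ^ 2" .
qed

lemma S0: "S_pmf 0 p = return_pmf 0"
  by (simp add: S_pmf_def)

lemma cpo00: "cpo_pmf 0 0 = return_pmf 0"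
  by (simp add: cpo_pmf_def po_pmf_def)

lemma main_ind:
  assumes "\<And>i. i < n \<Longrightarrow> 0 \<le> p i \<and> p i \<le> 1"
  shows "finite (set_pmf (S_pmf n p)) \<and>
         set_pmf (S_pmf n p) \<subseteq> set_pmf (cpo_pmf ((\<Sum>i<n. p i) / 2) ((\<Sum>i<n. p i) / 2)) \<and>
         dd (S_pmf n p) (cpo_pmf ((\<Sum>i<n. p i) / 2) ((\<Sum>i<n. p i) / 2)) \<le> (\<Sum>i<n. (p i)\<^sup>2)"
  using assms
proof (induction n)
  case 0
  show ?case by (simp add: S0 cpo00 dd_def)
next
  case (Suc n)
  let ?l = "(\<Sum>i<n. p i)"
  have IH: "finite (set_pmf (S_pmf n p))" "set_pmf (S_pmf n p) \<subseteq> set_pmf (cpo_pmf (?l / 2) (?l / 2))"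
     "dd (S_pmf n p) (cpo_pmf (?l / 2) (?l / 2)) \<le> (\<Sum>i<n. (p i)\<^sup>2)"
    using Suc by auto
  have pn: "0 \<le> p n" "p n \<le> 1" using Suc.prems by auto
  have l0: "?l \<ge> 0" using Suc.prems by (intro sum_nonneg) auto
  have c: "cpo_pmf ((\<Sum>i<Suc n. p i) / 2) ((\<Sum>i<Suc n. p i) / 2) = conv (cpo_pmf (?l / 2) (?l / 2)) (cpo_pmf (p n / 2) (p n / 2))"
    using l0 pn by (subst cpo_add) (auto simp: add_divide_distrib)
  have fY: "finite (set_pmf (Yp (p n)))" using set_Yp finite_subset by blast
  note cd = conv_d[OF IH(1) fY IH(2) step1(1)[OF pn]]
  have "finite (set_pmf (conv (S_pmf n p) (Yp (p n))))" using IH(1) fY by (simp add: set_conv)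
  moreover have "dd (conv (S_pmf n p) (Yp (p n))) (conv (cpo_pmf (?l / 2) (?l / 2)) (cpo_pmf (p n / 2) (p n / 2))) \<le> (\<Sum>i<Suc n. (p i)\<^sup>2)"
    using cd(2) IH(3) step1(2)[OF pn] by simp
  ultimately show ?case using cd(1) unfolding S_Suc c by blast
qed

theorem mainTheorem14:
  fixes n :: nat and p :: "nat \<Rightarrow> real"
  assumes "\<And>i. i < n \<Longrightarrow> 0 \<le> p i \<and> p i \<le> 1"
  defines "lam \<equiv> (\<Sum>i<n. p i)"
  shows "rel_entropy (S_pmf n p) (cpo_pmf (lam / 2) (lam / 2)) \<le> ereal (\<Sum>i<n. (p i)\<^sup>2)"
proof -
  note m = main_ind[OF assms(1)]
  show ?thesis using m unfolding rel_entropy_def lam_def dd_def by simp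
qed

end
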